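(* Let $q(y,z|x)$ be a discrete memoryless broadcast channel with capacity region $\mathcal C$, and let $\lambda_0,\lambda_1,\lambda_2$ be real numbers with $\lambda_0\ge\lambda_1+\lambda_2$. Then the maximum of $\lambda_0R_0+\lambda_1R_1+\lambda_2R_2$ over $(R_0,R_1,R_2)\in\mathcal C$ is attained at some triple with $R_1=0$ or $R_2=0$.
   Context: A two-receiver discrete memoryless broadcast channel has finite alphabets $\mathcal X,\mathcal Y,\mathcal Z$ and transition law $q(y,z|x)$. A rate triple $(R_0,R_1,R_2)$ (common message rate to both receivers, private rate to receiver $Y$, private rate to receiver $Z$) is achievable if for every $\epsilon>0$ and all large $n$ there is a length-$n$ code with those rates and average error probability at most $\epsilon$; $\mathcal C$ is the closure of the set of achievable triples. *)

theory Defs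
  imports "HOL-Probability.Probability"
begin

text \<open>Length-n sequences are functions nat \<Rightarrow> _ of which only the
 values at 0..n-1 matter (output sequences range over PiE {..<n}).\<close>

definition msg_size :: "nat \<Rightarrow> real \<Rightarrow> nat" where
  "msg_size n R = nat \<lceil>2 powr (real n * R)\<rceil>"

definition bc_prob ::
  "('x \<Rightarrow> ('y::finite \<times> 'z::finite) pmf) \<Rightarrow> nat \<Rightarrow> (nat \<Rightarrow> 'x)
     \<Rightarrow> ((nat \<Rightarrow> 'y) \<Rightarrow> (nat \<Rightarrow> 'z) \<Rightarrow> bool) \<Rightarrow> real" where
  "bc_prob q n x E =
     (\<Sum>y\<in>PiE {..<n} (\<lambda>_. UNIV). \<Sum>z\<in>PiE {..<n} (\<lambda>_. UNIV).
        (if E y z then (\<Prod>i<n. pmf (q (x i)) (y i, z i)) else 0))"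

definition bc_avg_error ::
  "('x \<Rightarrow> ('y::finite \<times> 'z::finite) pmf) \<Rightarrow> nat \<Rightarrow> nat \<Rightarrow> nat \<Rightarrow> nat
     \<Rightarrow> (nat \<times> nat \<times> nat \<Rightarrow> (nat \<Rightarrow> 'x))
     \<Rightarrow> ((nat \<Rightarrow> 'y) \<Rightarrow> nat \<times> nat) \<Rightarrow> ((nat \<Rightarrow> 'z) \<Rightarrow> nat \<times> nat) \<Rightarrow> real" where
  "bc_avg_error q n M0 M1 M2 f g1 g2 =
     (\<Sum>m0<M0. \<Sum>m1<M1. \<Sum>m2<M2.
        bc_prob q n (f (m0, m1, m2))
          (\<lambda>y z. g1 y \<noteq> (m0, m1) \<or> g2 z \<noteq> (m0, m2)))
     / real (M0 * M1 * M2)"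

definition bc_achievable ::
  "('x::finite \<Rightarrow> ('y::finite \<times> 'z::finite) pmf) \<Rightarrow> real \<times> real \<times> real \<Rightarrow> bool" where
  "bc_achievable q R =
     (case R of (R0, R1, R2) \<Rightarrow>
       R0 \<ge> 0 \<and> R1 \<ge> 0 \<and> R2 \<ge> 0 \<and>
       (\<forall>\<epsilon>>0. \<exists>N. \<forall>n\<ge>N. \<exists>f g1 g2.
          bc_avg_error q n (msg_size n R0) (msg_size n R1) (msg_size n R2) f g1 g2 \<le> \<epsilon>))"

definition bc_capacity_region ::
  "('x::finite \<Rightarrow> ('y::finite \<times> 'z::finite) pmf) \<Rightarrow> (real \<times> real \<times> real) set" where
  "bc_capacity_region q = closure {R. bc_achievable q R}"

end

theory Submission
  imports Defs
begin

lemma bc_prob_mono: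
  assumes "\<And>y z. E y z \<Longrightarrow> F y z"
  shows "bc_prob q n x E \<le> bc_prob q n x F"
  unfolding bc_prob_def
proof (intro sum_mono)
  fix y z
  have "0 \<le> (\<Prod>i<n. pmf (q (x i)) (y i, z i))" by (simp add: prod_nonneg)
  thus "(if E y z then \<Prod>i<n. pmf (q (x i)) (y i, z i) else 0)
     \<le> (if F y z then \<Prod>i<n. pmf (q (x i)) (y i, z i) else 0)"
    using assms[of y z] by auto
qed

lemma bc_prob_le_count:
  "bc_prob q n x E \<le> (\<Sum>y\<in>PiE {..<n} (\<lambda>_. UNIV). \<Sum>z\<in>PiE {..<n} (\<lambda>_. UNIV). (if E y z then 1 else 0))"
  unfolding bc_prob_def
proof (intro sum_mono)
  fix y z
  have "(\<Prod>i<n. pmf (q (x i)) (y i, z i)) \<le> 1" by (rule prod_le_1) (simp add: pmf_le_1)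
  thus "(if E y z then \<Prod>i<n. pmf (q (x i)) (y i, z i) else 0)
     \<le> (if E y z then 1 else 0)" by simp
qed

lemma pmf_pair_sum: "(\<Sum>u\<in>UNIV. \<Sum>w\<in>UNIV. pmf (p::('a::finite\<times>'b::finite) pmf) (u, w)) = 1"
proof -
  have "(\<Sum>u\<in>UNIV. \<Sum>w\<in>UNIV. pmf p (u, w)) = (\<Sum>uw\<in>UNIV \<times> UNIV. pmf p uw)"
    by (simp add: sum.cartesian_product)
  also have "\<dots> = 1" by (simp add: UNIV_Times_UNIV sum_pmf_eq_1)
  finally show ?thesis .
qed

lemma bc_prob_total:
  fixes q :: "'x \<Rightarrow> ('y::finite \<times> 'z::finite) pmf"
    and n :: nat
  shows "(\<Sum>y\<in>PiE {..<n} (\<lambda>_. UNIV). \<Sum>z\<in>PiE {..<n} (\<lambda>_. UNIV).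
        (\<Prod>i<n. pmf (q (x i)) (y i, z i))) = (1::real)"
proof -
  have "(\<Sum>y\<in>PiE {..<n} (\<lambda>_. UNIV). \<Sum>z\<in>PiE {..<n} (\<lambda>_. UNIV).
        (\<Prod>i<n. pmf (q (x i)) (y i, z i)))
     = (\<Sum>y\<in>PiE {..<n} (\<lambda>_. UNIV). \<Prod>i<n. \<Sum>w\<in>UNIV. pmf (q (x i)) (y i, w))"
    by (intro sum.cong refl)
       (use prod_sum_PiE[of "{..<n}" "\<lambda>_. UNIV" "\<lambda>i w. pmf (q (x i)) (y i, w)" for y] in simp)
  also have "\<dots> = (\<Prod>i<n. \<Sum>u\<in>UNIV. \<Sum>w\<in>UNIV. pmf (q (x i)) (u, w))"
    using prod_sum_PiE[of "{..<n}" "\<lambda>_. UNIV" "\<lambda>i u. \<Sum>w\<in>UNIV. pmf (q (x i)) (u, w)"] by simp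
  also have "\<dots> = 1" by (simp add: pmf_pair_sum)
  finally show ?thesis .
qed

lemma bc_prob_compl:
  "bc_prob q n x E + bc_prob q n x (\<lambda>y z. \<not> E y z) = 1"
proof -
  have "bc_prob q n x E + bc_prob q n x (\<lambda>y z. \<not> E y z) =
    (\<Sum>y\<in>PiE {..<n} (\<lambda>_. UNIV). \<Sum>z\<in>PiE {..<n} (\<lambda>_. UNIV).
        (\<Prod>i<n. pmf (q (x i)) (y i, z i)))"
    unfolding bc_prob_def sum.distrib[symmetric] by (intro sum.cong refl) auto
  thus ?thesis using bc_prob_total by simp
qed

lemma ms_real: "real (msg_size n R) = real_of_int \<lceil>2 powr (real n * R)\<rceil>"
  unfolding msg_size_def by (simp add: ceiling_le_zero)

lemma ms_ge: "2 powr (real n * R) \<le> real (msg_size n R)"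
  unfolding ms_real by linarith

lemma ms_lt: "real (msg_size n R) < 2 powr (real n * R) + 1"
  unfolding ms_real by linarith

lemma ms_pos: "msg_size n R \<ge> 1"
proof -
  have "0 < 2 powr (real n * R)" by simp
  hence "0 < real (msg_size n R)" using ms_ge[of n R] by linarith
  thus ?thesis by simp
qed

lemma shift_inj: "(c + s) mod M = (c + s') mod M \<Longrightarrow> s < M \<Longrightarrow> s' < (M::nat) \<Longrightarrow> s = s'"
proof -
  assume h: "(c + s) mod M = (c + s') mod M" and a: "s < M" "s' < M"
  have hi: "(int c + int s) mod int M = (int c + int s') mod int M"
    using h by (metis of_nat_add of_nat_mod)
  have "int s mod int M = ((int c + int s) mod int M - int c) mod int M"
    by (simp add: mod_diff_left_eq)
  also have "\<dots> = ((int c + int s') mod int M - int c) mod int M" using hi by simp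
  also have "\<dots> = int s' mod int M" by (simp add: mod_diff_left_eq)
  finally have "int s mod int M = int s' mod int M" .
  thus ?thesis using a by simp
qed

lemma shift_bij: "(M::nat) > 0 \<Longrightarrow> bij_betw (\<lambda>s. (c + s) mod M) {..<M} {..<M}"
proof -
  assume M: "M > 0"
  have inj: "inj_on (\<lambda>s. (c + s) mod M) {..<M}"
    by (rule inj_onI) (auto intro: shift_inj)
  have sub: "(\<lambda>s. (c + s) mod M) ` {..<M} \<subseteq> {..<M}" using M by auto
  show ?thesis unfolding bij_betw_def using inj endo_inj_surj[OF _ sub inj] by auto
qed

lemma shift_sum: "(M::nat) > 0 \<Longrightarrow> (\<Sum>s<M. h ((c + s) mod M)) = (\<Sum>r<M. h r)"
  using sum.reindex_bij_betw[OF shift_bij[of M c], of h] by simp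

lemma exists_le_avg:
  fixes f :: "'a \<Rightarrow> real"
  assumes "finite S" "S \<noteq> {}" "sum f S \<le> real (card S) * X"
  shows "\<exists>s\<in>S. f s \<le> X"
proof (rule ccontr)
  assume "\<not> ?thesis"
  hence "\<And>s. s \<in> S \<Longrightarrow> X < f s" by auto
  hence "(\<Sum>s\<in>S. X) < sum f S" using assms by (intro sum_strict_mono) auto
  thus False using assms by simp
qed

lemma modinv: "x < (M::nat) \<Longrightarrow> s < M \<Longrightarrow> ((x + s) mod M + M - s) mod M = x"
proof -
  assume a: "x < M" "s < M"
  show ?thesis
  proof (cases "x + s < M")
    case True thus ?thesis using a by simp
  next
    case False
    hence "(x + s) mod M = x + s - M" using a by (simp add: le_mod_geq)
    hence "(x + s) mod M + M - s = x" using False a by simp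
    thus ?thesis using a by simp
  qed
qed

lemma shift_sum3:
  assumes "(M0::nat) > 0" "(M1::nat) > 0" "(M2::nat) > 0"
  shows "(\<Sum>s0<M0. \<Sum>s1<M1. \<Sum>s2<M2. h ((A + s0) mod M0) ((B + s1) mod M1) ((C + s2) mod M2))
    = (\<Sum>r0<M0. \<Sum>r1<M1. \<Sum>r2<M2. (h r0 r1 r2 :: real))"
proof -
  have e2: "(\<Sum>s2<M2. h x y ((C + s2) mod M2)) = (\<Sum>r2<M2. h x y r2)" for x y
    using shift_sum[OF assms(3)] by blast
  have e1: "(\<Sum>s1<M1. (\<lambda>y. \<Sum>r2<M2. h x y r2) ((B + s1) mod M1)) = (\<Sum>r1<M1. \<Sum>r2<M2. h x r1 r2)" for x
    using shift_sum[OF assms(2), of "\<lambda>y. \<Sum>r2<M2. h x y r2" B] by simp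
  have e0: "(\<Sum>s0<M0. (\<lambda>x. \<Sum>r1<M1. \<Sum>r2<M2. h x r1 r2) ((A + s0) mod M0)) = (\<Sum>r0<M0. \<Sum>r1<M1. \<Sum>r2<M2. h r0 r1 r2)"
    using shift_sum[OF assms(1), of "\<lambda>x. \<Sum>r1<M1. \<Sum>r2<M2. h x r1 r2" A] by simp
  show ?thesis using e0 e1 e2 by simp
qed

lemma decode:
  assumes "(a::nat) < N0" "b < N1" "N0 \<le> M0*K" "N1*K \<le> M1" "K > 0" "s0 < M0" "s1 < M1"
  shows "(((a div K + s0) mod M0 + M0 - s0) mod M0 * K + ((b*K + a mod K + s1) mod M1 + M1 - s1) mod M1 mod K,
          ((b*K + a mod K + s1) mod M1 + M1 - s1) mod M1 div K) = (a,b)"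
proof -
  have "a < M0 * K" using assms by linarith
  hence a1: "a div K < M0" using assms by (simp add: less_mult_imp_div_less)
  have "b*K + a mod K < b*K + K" using assms by simp
  also have "\<dots> = (b+1)*K" by simp
  also have "\<dots> \<le> N1 * K" using assms by (intro mult_right_mono) auto
  finally have b1: "b*K + a mod K < M1" using assms by linarith
  have e1: "((a div K + s0) mod M0 + M0 - s0) mod M0 = a div K" using modinv[OF a1 assms(6)] .
  have e2: "((b*K + a mod K + s1) mod M1 + M1 - s1) mod M1 = b*K + a mod K" using modinv[OF b1 assms(7)] .
  have e3: "(b*K + a mod K) mod K = a mod K" by simp
  have e4: "(b*K + a mod K) div K = b" using assms by simp
  show ?thesis unfolding e1 e2 e3 e4 by simp
qed

lemma construct:
  fixes q :: "'x::finite \<Rightarrow> ('y::finite \<times> 'z::finite) pmf"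
  assumes K: "K > 0" and N: "N0 > 0" "N1 > 0" "N2 > 0"
    and le: "N0 \<le> M0 * K" "N1 * K \<le> M1" "N2 * K \<le> M2"
  shows "\<exists>f' g1' g2'. bc_avg_error q n N0 N1 N2 f' g1' g2' \<le> bc_avg_error q n M0 M1 M2 f g1 g2"
proof -
  have M: "M0 > 0" "M1 > 0" "M2 > 0" using K N le
    by (metis mult_is_0 not_gr_zero le_zero_eq)+
  define err where "err m0 m1 m2 = bc_prob q n (f (m0, m1, m2))
          (\<lambda>y z. g1 y \<noteq> (m0, m1) \<or> g2 z \<noteq> (m0, m2))" for m0 m1 m2
  define Tot where "Tot = (\<Sum>m0<M0. \<Sum>m1<M1. \<Sum>m2<M2. err m0 m1 m2)"
  define P where "P = (\<lambda>(s0,s1,s2) (a,b,c). err ((a div K + s0) mod M0)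
       ((b*K + a mod K + s1) mod M1) ((c*K + a mod K + s2) mod M2))"
  define S where "S = {..<M0} \<times> {..<M1} \<times> {..<M2}"
  define New where "New = {..<N0} \<times> {..<N1} \<times> {..<N2}"
  have key: "(\<Sum>s\<in>S. P s m) = Tot" if "m \<in> New" for m
  proof -
    obtain a b c where m: "m = (a,b,c)" by (cases m) auto
    have "(\<Sum>s\<in>S. P s m) = (\<Sum>s0<M0. \<Sum>s1<M1. \<Sum>s2<M2. err ((a div K + s0) mod M0)
       ((b*K + a mod K + s1) mod M1) ((c*K + a mod K + s2) mod M2))"
    proof -
      have "(\<Sum>s\<in>S. P s m) = (\<Sum>(s0,s1,s2)\<in>S. err ((a div K + s0) mod M0)
       ((b*K + a mod K + s1) mod M1) ((c*K + a mod K + s2) mod M2))"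
        by (intro sum.cong) (auto simp: P_def m)
      thus ?thesis unfolding S_def by (simp add: sum.cartesian_product)
    qed
    also have "\<dots> = Tot" unfolding Tot_def by (rule shift_sum3[OF M])
    finally show ?thesis .
  qed
  have "(\<Sum>s\<in>S. \<Sum>m\<in>New. P s m) = (\<Sum>m\<in>New. \<Sum>s\<in>S. P s m)"
    by (rule sum.swap)
  also have "\<dots> = real (card New) * Tot" using key by simp
  finally have tot: "(\<Sum>s\<in>S. \<Sum>m\<in>New. P s m) = real (card New) * Tot" .
  have cS: "card S = M0 * M1 * M2" unfolding S_def by (simp add: card_cartesian_product)
  have cN: "card New = N0 * N1 * N2" unfolding New_def by (simp add: card_cartesian_product)
  have "S \<noteq> {}" unfolding S_def using M by auto
  moreover have "finite S" unfolding S_def by simp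
  ultimately obtain s where sS: "s \<in> S" and
    sb: "(\<Sum>m\<in>New. P s m) \<le> real (card New) * Tot / real (card S)"
    using exists_le_avg[of S "\<lambda>s. \<Sum>m\<in>New. P s m" "real (card New) * Tot / real (card S)"] tot
    by auto
  obtain s0 s1 s2 where s: "s = (s0,s1,s2)" by (cases s) auto
  have s_lt: "s0 < M0" "s1 < M1" "s2 < M2" using sS s S_def by auto
  define f' where "f' = (\<lambda>(a,b,c). f ((a div K + s0) mod M0,
       (b*K + a mod K + s1) mod M1, (c*K + a mod K + s2) mod M2))"
  define g1' where "g1' = (\<lambda>y. case g1 y of (u,v) \<Rightarrow>
      (((u + M0 - s0) mod M0) * K + ((v + M1 - s1) mod M1) mod K, ((v + M1 - s1) mod M1) div K))"
  define g2' where "g2' = (\<lambda>z. case g2 z of (u,v) \<Rightarrow>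
      (((u + M0 - s0) mod M0) * K + ((v + M2 - s2) mod M2) mod K, ((v + M2 - s2) mod M2) div K))"
  have per: "bc_prob q n (f' (a,b,c)) (\<lambda>y z. g1' y \<noteq> (a,b) \<or> g2' z \<noteq> (a,c)) \<le> P s (a,b,c)"
    if "a < N0" "b < N1" "c < N2" for a b c
  proof -
    have d1: "g1' y = (a,b)" if "g1 y = ((a div K + s0) mod M0, (b*K + a mod K + s1) mod M1)" for y
      unfolding g1'_def using that decode[OF \<open>a < N0\<close> \<open>b < N1\<close> le(1) le(2) K s_lt(1) s_lt(2)] by simp
    have d2: "g2' z = (a,c)" if "g2 z = ((a div K + s0) mod M0, (c*K + a mod K + s2) mod M2)" for z
      unfolding g2'_def using that decode[OF \<open>a < N0\<close> \<open>c < N2\<close> le(1) le(3) K s_lt(1) s_lt(3)] by simp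
    have "P s (a,b,c) = bc_prob q n (f' (a,b,c)) (\<lambda>y z. g1 y \<noteq> ((a div K + s0) mod M0, (b*K + a mod K + s1) mod M1)
        \<or> g2 z \<noteq> ((a div K + s0) mod M0, (c*K + a mod K + s2) mod M2))"
      unfolding P_def s err_def f'_def by simp
    moreover have "bc_prob q n (f' (a,b,c)) (\<lambda>y z. g1' y \<noteq> (a,b) \<or> g2' z \<noteq> (a,c)) \<le>
       bc_prob q n (f' (a,b,c)) (\<lambda>y z. g1 y \<noteq> ((a div K + s0) mod M0, (b*K + a mod K + s1) mod M1)
        \<or> g2 z \<noteq> ((a div K + s0) mod M0, (c*K + a mod K + s2) mod M2))"
      by (rule bc_prob_mono) (use d1 d2 in blast)
    ultimately show ?thesis by simp
  qed
  have "(\<Sum>a<N0. \<Sum>b<N1. \<Sum>c<N2. bc_prob q n (f' (a,b,c)) (\<lambda>y z. g1' y \<noteq> (a,b) \<or> g2' z \<noteq> (a,c)))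
     \<le> (\<Sum>a<N0. \<Sum>b<N1. \<Sum>c<N2. P s (a,b,c))"
    by (intro sum_mono per) auto
  also have "\<dots> = (\<Sum>m\<in>New. P s m)"
    unfolding New_def by (simp add: sum.cartesian_product split_def)
  finally have nb: "(\<Sum>a<N0. \<Sum>b<N1. \<Sum>c<N2. bc_prob q n (f' (a,b,c)) (\<lambda>y z. g1' y \<noteq> (a,b) \<or> g2' z \<noteq> (a,c)))
     \<le> real (N0*N1*N2) * Tot / real (M0*M1*M2)" using sb cS cN by simp
  define X where "X = (\<Sum>a<N0. \<Sum>b<N1. \<Sum>c<N2. bc_prob q n (f' (a,b,c)) (\<lambda>y z. g1' y \<noteq> (a,b) \<or> g2' z \<noteq> (a,c)))"
  have ae: "bc_avg_error q n N0 N1 N2 f' g1' g2' = X / real (N0*N1*N2)" unfolding bc_avg_error_def X_def ..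
  have D: "real (N0*N1*N2) > 0" using N by simp
  have "X / real (N0*N1*N2) \<le> (real (N0*N1*N2) * Tot / real (M0*M1*M2)) / real (N0*N1*N2)"
    using nb D unfolding X_def by (intro divide_right_mono) auto
  also have "\<dots> = Tot / real (M0*M1*M2)"
  proof -
    have g: "(d*t/e)/d = t/e" if "d \<noteq> 0" for d t e :: real using that by simp
    show ?thesis by (rule g) (use N in simp)
  qed
  finally have "bc_avg_error q n N0 N1 N2 f' g1' g2' \<le> Tot / real (M0*M1*M2)" using ae by simp
  also have "\<dots> = bc_avg_error q n M0 M1 M2 f g1 g2"
    unfolding bc_avg_error_def Tot_def err_def ..
  finally show ?thesis by blast
qed

lemma size_priv:
  assumes t: "t \<le> R" and d: "1 \<le> real n * \<delta> / 2"
    and Kd: "real K \<le> 2 powr (real n * (t - \<delta>/2))"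
  shows "msg_size n (R - t) * K \<le> msg_size n R"
proof -
  have N: "real (msg_size n (R - t)) \<le> 2 powr (real n * (R - t)) + 1" using ms_lt[of n "R-t"] by linarith
  have "real (msg_size n (R - t)) * real K \<le> (2 powr (real n * (R - t)) + 1) * 2 powr (real n * (t - \<delta>/2))"
    using N Kd by (intro mult_mono) auto
  also have "\<dots> = 2 powr (real n * (R - \<delta>/2)) + 2 powr (real n * (t - \<delta>/2))"
    by (simp add: distrib_right powr_add[symmetric] algebra_simps)
  also have "\<dots> \<le> 2 powr (real n * (R - \<delta>/2)) + 2 powr (real n * (R - \<delta>/2))"
    using t by (simp add: mult_left_mono)
  also have "\<dots> = 2 powr (1 + real n * (R - \<delta>/2))" by (simp add: powr_add)
  also have "\<dots> \<le> 2 powr (real n * R)" using d by (simp add: algebra_simps)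
  also have "\<dots> \<le> real (msg_size n R)" by (rule ms_ge)
  finally have "real (msg_size n (R - t) * K) \<le> real (msg_size n R)" by simp
  thus ?thesis by linarith
qed

lemma size_common:
  assumes R0: "0 \<le> R0" and d0: "\<delta> \<le> t" and d: "4 \<le> real n * \<delta>"
    and Kd: "real K > 2 powr (real n * (t - \<delta>/2)) - 1"
  shows "msg_size n (R0 + t - \<delta>) \<le> msg_size n R0 * K"
proof -
  define P where "P = 2 powr (real n * R0)"
  define Q where "Q = 2 powr (real n * (t - \<delta>))"
  define x where "x = 2 powr (real n * \<delta> / 2)"
  have P1: "P \<ge> 1" unfolding P_def by (rule ge_one_powr_ge_zero) (use R0 in auto)
  have Q1: "Q \<ge> 1" unfolding Q_def by (rule ge_one_powr_ge_zero) (use d0 in auto)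
  have x4: "x \<ge> 4" unfolding x_def
  proof -
    have "(4::real) = 2 powr 2" by simp
    also have "\<dots> \<le> 2 powr (real n * \<delta> / 2)" using d by (intro powr_mono) auto
    finally show "4 \<le> 2 powr (real n * \<delta> / 2)" .
  qed
  have e1: "2 powr (real n * (R0 + t - \<delta>)) = P * Q"
    unfolding P_def Q_def by (simp add: powr_add[symmetric] algebra_simps)
  have e2: "2 powr (real n * (t - \<delta>/2)) = Q * x"
    unfolding x_def Q_def by (simp add: powr_add[symmetric] algebra_simps)
  have N0: "real (msg_size n (R0 + t - \<delta>)) < P * Q + 1" using ms_lt[of n "R0 + t - \<delta>"] e1 by simp
  have M0: "real (msg_size n R0) \<ge> P" unfolding P_def by (rule ms_ge)
  have K: "real K \<ge> Q * x - 1" using Kd e2 by simp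
  have Qx: "Q * x - 1 \<ge> 0" proof -
    have "1 * 1 \<le> Q * x" using Q1 x4 by (intro mult_mono) auto
    thus ?thesis by simp
  qed
  have "P * (Q * x - 1) \<le> real (msg_size n R0) * real K"
    using M0 K Qx P1 by (intro mult_mono) auto
  moreover have "P * Q + 1 \<le> P * (Q * x - 1)"
  proof -
    have a: "P * Q * 4 \<le> P * Q * x" using x4 P1 Q1 by (intro mult_left_mono) auto
    have b: "P \<le> P * Q" using P1 Q1 by simp
    have c: "P * (Q * x - 1) = P * Q * x - P" by (simp add: algebra_simps)
    show ?thesis unfolding c using a b P1 by linarith
  qed
  ultimately have "real (msg_size n (R0 + t - \<delta>)) \<le> real (msg_size n R0 * K)" using N0 by simp
  thus ?thesis by linarith
qed

lemma count_le:
  assumes "finite W" "finite A" "finite B"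
  shows "(\<Sum>p\<in>A\<times>B. \<Sum>w\<in>W. if h w = p then 1 else 0) \<le> real (card W)"
proof -
  have "(\<Sum>p\<in>A\<times>B. \<Sum>w\<in>W. if h w = p then (1::real) else 0) = (\<Sum>w\<in>W. \<Sum>p\<in>A\<times>B. if h w = p then 1 else 0)"
    by (rule sum.swap)
  also have "\<dots> = (\<Sum>w\<in>W. if h w \<in> A\<times>B then 1 else 0)"
    using assms by (intro sum.cong refl) (simp add: sum.delta)
  also have "\<dots> \<le> (\<Sum>w\<in>W. 1)" by (intro sum_mono) auto
  finally show ?thesis by simp
qed

lemma nest4:
  "(\<Sum>a\<in>A. \<Sum>b\<in>B. \<Sum>y\<in>Y. \<Sum>z\<in>Z. (h (a,b) (y,z) :: real)) = (\<Sum>p\<in>A\<times>B. \<Sum>w\<in>Y\<times>Z. h p w)"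
  by (simp only: sum.cartesian_product')

lemma log_final:
  fixes n :: nat and R L :: real
  assumes n: "n \<ge> 1" and h: "2 powr (real n * R) \<le> 2 * W ^ n" and W: "W \<ge> 1"
  shows "R \<le> 1 + log 2 W"
proof -
  have Wp: "0 < W" using W by simp
  have "log 2 (2 powr (real n * R)) \<le> log 2 (2 * W ^ n)"
    using h Wp by (subst log_le_cancel_iff) auto
  hence h2: "real n * R \<le> 1 + real n * log 2 W"
    using Wp by (simp add: log_mult_pos log_nat_power)
  show ?thesis
  proof (rule ccontr)
    assume "\<not> ?thesis"
    hence g: "1 < R - log 2 W" by simp
    have "1 * (R - log 2 W) \<le> real n * (R - log 2 W)" using n g by (intro mult_right_mono) auto
    thus False using g h2 by (simp add: right_diff_distrib)
  qed
qed

lemma bound_Y: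
  fixes q :: "'x::finite \<Rightarrow> ('y::finite \<times> 'z::finite) pmf"
  assumes "bc_achievable q (R0,R1,R2)"
  shows "R0 + R1 \<le> 1 + log 2 (real (CARD('y) * CARD('z)))"
proof -
  from assms have nn: "R0 \<ge> 0" "R1 \<ge> 0" "R2 \<ge> 0" and
    ach: "\<forall>\<epsilon>>0. \<exists>N. \<forall>n\<ge>N. \<exists>f g1 g2.
          bc_avg_error q n (msg_size n R0) (msg_size n R1) (msg_size n R2) f g1 g2 \<le> \<epsilon>"
    by (auto simp: bc_achievable_def)
  obtain N where hN: "\<forall>n\<ge>N. \<exists>f g1 g2.
          bc_avg_error q n (msg_size n R0) (msg_size n R1) (msg_size n R2) f g1 g2 \<le> 1/2"
    using ach[rule_format, of "1/2"] by auto
  define n where "n = Suc N"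
  define M0 where "M0 = msg_size n R0"
  define M1 where "M1 = msg_size n R1"
  define M2 where "M2 = msg_size n R2"
  obtain f g1 g2 where e: "bc_avg_error q n M0 M1 M2 f g1 g2 \<le> 1/2"
  proof -
    have "n \<ge> N" unfolding n_def by simp
    thus ?thesis using that hN unfolding M0_def M1_def M2_def by blast
  qed
  define Yn where "Yn = PiE {..<n} (\<lambda>_. UNIV :: 'y set)"
  define Zn where "Zn = PiE {..<n} (\<lambda>_. UNIV :: 'z set)"
  define err where "err m0 m1 m2 = bc_prob q n (f (m0, m1, m2))
          (\<lambda>y z. g1 y \<noteq> (m0, m1) \<or> g2 z \<noteq> (m0, m2))" for m0 m1 m2
  define c where "c m0 m1 m2 = bc_prob q n (f (m0, m1, m2)) (\<lambda>y z. g1 y = (m0, m1))" for m0 m1 m2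
  have Mp: "M0 \<ge> 1" "M1 \<ge> 1" "M2 \<ge> 1" using ms_pos[of n R0] ms_pos[of n R1] ms_pos[of n R2] unfolding M0_def M1_def M2_def by auto
  hence Mr: "real (M0*M1*M2) > 0" by simp
  have se: "(\<Sum>m0<M0. \<Sum>m1<M1. \<Sum>m2<M2. err m0 m1 m2) \<le> real (M0*M1*M2) / 2"
  proof -
    have "(\<Sum>m0<M0. \<Sum>m1<M1. \<Sum>m2<M2. err m0 m1 m2) / real (M0*M1*M2) \<le> 1/2"
      using e unfolding bc_avg_error_def err_def .
    thus ?thesis using Mr by (simp add: pos_divide_le_eq)
  qed
  have ce: "1 - c m0 m1 m2 \<le> err m0 m1 m2" for m0 m1 m2
  proof -
    have "c m0 m1 m2 + bc_prob q n (f (m0, m1, m2)) (\<lambda>y z. \<not> g1 y = (m0, m1)) = 1"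
      unfolding c_def by (rule bc_prob_compl)
    moreover have "bc_prob q n (f (m0, m1, m2)) (\<lambda>y z. \<not> g1 y = (m0, m1)) \<le> err m0 m1 m2"
      unfolding err_def by (rule bc_prob_mono) auto
    ultimately show ?thesis by linarith
  qed
  have cb: "c m0 m1 m2 \<le> (\<Sum>y\<in>Yn. \<Sum>z\<in>Zn. if g1 y = (m0, m1) then 1 else 0)" for m0 m1 m2
    unfolding c_def Yn_def Zn_def by (rule bc_prob_le_count)
  have fin: "finite Yn" "finite Zn" unfolding Yn_def Zn_def by (auto intro!: finite_PiE)
  have cnt: "(\<Sum>m0<M0. \<Sum>m1<M1. \<Sum>y\<in>Yn. \<Sum>z\<in>Zn. if g1 y = (m0, m1) then 1 else 0)
      \<le> real (card (Yn \<times> Zn))"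
  proof -
    have "(\<Sum>m0<M0. \<Sum>m1<M1. \<Sum>y\<in>Yn. \<Sum>z\<in>Zn. if g1 y = (m0, m1) then (1::real) else 0)
      = (\<Sum>p\<in>{..<M0}\<times>{..<M1}. \<Sum>w\<in>Yn\<times>Zn. if g1 (fst w) = p then 1 else 0)"
      using nest4[where h = "\<lambda>p w. if g1 (fst w) = p then (1::real) else 0" and A = "{..<M0}"
          and B = "{..<M1}" and Y = Yn and Z = Zn] by (simp only: fst_conv)
    also have "\<dots> \<le> real (card (Yn \<times> Zn))" by (rule count_le) (use fin in auto)
    finally show ?thesis .
  qed
  have "real (M0*M1*M2) - (\<Sum>m0<M0. \<Sum>m1<M1. \<Sum>m2<M2. c m0 m1 m2)
      = (\<Sum>m0<M0. \<Sum>m1<M1. \<Sum>m2<M2. 1 - c m0 m1 m2)"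
    by (simp add: sum_subtractf)
  also have "\<dots> \<le> (\<Sum>m0<M0. \<Sum>m1<M1. \<Sum>m2<M2. err m0 m1 m2)"
    by (intro sum_mono ce)
  finally have c1: "real (M0*M1*M2) / 2 \<le> (\<Sum>m0<M0. \<Sum>m1<M1. \<Sum>m2<M2. c m0 m1 m2)"
    using se by linarith
  have "(\<Sum>m0<M0. \<Sum>m1<M1. \<Sum>m2<M2. c m0 m1 m2)
     \<le> (\<Sum>m0<M0. \<Sum>m1<M1. \<Sum>m2<M2. (\<Sum>y\<in>Yn. \<Sum>z\<in>Zn. if g1 y = (m0, m1) then 1 else 0))"
    by (intro sum_mono cb)
  also have "\<dots> = real M2 * (\<Sum>m0<M0. \<Sum>m1<M1. \<Sum>y\<in>Yn. \<Sum>z\<in>Zn. if g1 y = (m0, m1) then 1 else 0)"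
    by (simp add: sum_distrib_left)
  also have "\<dots> \<le> real M2 * real (card (Yn \<times> Zn))"
    by (intro mult_left_mono cnt) auto
  finally have "real (M0*M1*M2) / 2 \<le> real M2 * real (card (Yn \<times> Zn))" using c1 by linarith
  hence "real M2 * (real (M0*M1)) \<le> real M2 * (2 * real (card (Yn \<times> Zn)))"
    by (simp add: algebra_simps)
  hence MM: "real (M0*M1) \<le> 2 * real (card (Yn \<times> Zn))" using Mp by simp
  have cardYZ: "real (card (Yn \<times> Zn)) = real (CARD('y) * CARD('z)) ^ n"
    unfolding Yn_def Zn_def by (simp add: card_cartesian_product card_PiE power_mult_distrib)
  have "2 powr (real n * (R0 + R1)) = 2 powr (real n * R0) * 2 powr (real n * R1)"
    by (simp add: powr_add[symmetric] algebra_simps)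
  also have "\<dots> \<le> real M0 * real M1" unfolding M0_def M1_def
    by (intro mult_mono ms_ge) auto
  finally have "2 powr (real n * (R0 + R1)) \<le> 2 * real (CARD('y) * CARD('z)) ^ n"
    using MM cardYZ by simp
  moreover have "real (CARD('y) * CARD('z)) \<ge> 1"
  proof -
    have "0 < CARD('y) * CARD('z)" by simp
    hence "1 \<le> CARD('y) * CARD('z)" by linarith
    thus ?thesis by (metis of_nat_1 of_nat_le_iff)
  qed
  ultimately show ?thesis using log_final[of n "R0 + R1"] n_def by simp
qed

lemma bound_Z:
  fixes q :: "'x::finite \<Rightarrow> ('y::finite \<times> 'z::finite) pmf"
  assumes "bc_achievable q (R0,R1,R2)"
  shows "R0 + R2 \<le> 1 + log 2 (real (CARD('y) * CARD('z)))"
proof -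
  from assms have nn: "R0 \<ge> 0" "R1 \<ge> 0" "R2 \<ge> 0" and
    ach: "\<forall>\<epsilon>>0. \<exists>N. \<forall>n\<ge>N. \<exists>f g1 g2.
          bc_avg_error q n (msg_size n R0) (msg_size n R1) (msg_size n R2) f g1 g2 \<le> \<epsilon>"
    by (auto simp: bc_achievable_def)
  obtain N where hN: "\<forall>n\<ge>N. \<exists>f g1 g2.
          bc_avg_error q n (msg_size n R0) (msg_size n R1) (msg_size n R2) f g1 g2 \<le> 1/2"
    using ach[rule_format, of "1/2"] by auto
  define n where "n = Suc N"
  define M0 where "M0 = msg_size n R0"
  define M1 where "M1 = msg_size n R1"
  define M2 where "M2 = msg_size n R2"
  obtain f g1 g2 where e: "bc_avg_error q n M0 M1 M2 f g1 g2 \<le> 1/2"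
  proof -
    have "n \<ge> N" unfolding n_def by simp
    thus ?thesis using that hN unfolding M0_def M1_def M2_def by blast
  qed
  define Yn where "Yn = PiE {..<n} (\<lambda>_. UNIV :: 'y set)"
  define Zn where "Zn = PiE {..<n} (\<lambda>_. UNIV :: 'z set)"
  define err where "err m0 m1 m2 = bc_prob q n (f (m0, m1, m2))
          (\<lambda>y z. g1 y \<noteq> (m0, m1) \<or> g2 z \<noteq> (m0, m2))" for m0 m1 m2
  define c where "c m0 m1 m2 = bc_prob q n (f (m0, m1, m2)) (\<lambda>y z. g2 z = (m0, m2))" for m0 m1 m2
  have Mp: "M0 \<ge> 1" "M1 \<ge> 1" "M2 \<ge> 1" using ms_pos[of n R0] ms_pos[of n R1] ms_pos[of n R2] unfolding M0_def M1_def M2_def by auto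
  hence Mr: "real (M0*M1*M2) > 0" by simp
  have se: "(\<Sum>m0<M0. \<Sum>m1<M1. \<Sum>m2<M2. err m0 m1 m2) \<le> real (M0*M1*M2) / 2"
  proof -
    have "(\<Sum>m0<M0. \<Sum>m1<M1. \<Sum>m2<M2. err m0 m1 m2) / real (M0*M1*M2) \<le> 1/2"
      using e unfolding bc_avg_error_def err_def .
    thus ?thesis using Mr by (simp add: pos_divide_le_eq)
  qed
  have ce: "1 - c m0 m1 m2 \<le> err m0 m1 m2" for m0 m1 m2
  proof -
    have "c m0 m1 m2 + bc_prob q n (f (m0, m1, m2)) (\<lambda>y z. \<not> g2 z = (m0, m2)) = 1"
      unfolding c_def by (rule bc_prob_compl)
    moreover have "bc_prob q n (f (m0, m1, m2)) (\<lambda>y z. \<not> g2 z = (m0, m2)) \<le> err m0 m1 m2"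
      unfolding err_def by (rule bc_prob_mono) auto
    ultimately show ?thesis by linarith
  qed
  have cb: "c m0 m1 m2 \<le> (\<Sum>y\<in>Yn. \<Sum>z\<in>Zn. if g2 z = (m0, m2) then 1 else 0)" for m0 m1 m2
    unfolding c_def Yn_def Zn_def by (rule bc_prob_le_count)
  have fin: "finite Yn" "finite Zn" unfolding Yn_def Zn_def by (auto intro!: finite_PiE)
  have cnt: "(\<Sum>m0<M0. \<Sum>m2<M2. \<Sum>y\<in>Yn. \<Sum>z\<in>Zn. if g2 z = (m0, m2) then 1 else 0)
      \<le> real (card (Yn \<times> Zn))"
  proof -
    have "(\<Sum>m0<M0. \<Sum>m2<M2. \<Sum>y\<in>Yn. \<Sum>z\<in>Zn. if g2 z = (m0, m2) then (1::real) else 0)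
      = (\<Sum>p\<in>{..<M0}\<times>{..<M2}. \<Sum>w\<in>Yn\<times>Zn. if g2 (snd w) = p then 1 else 0)"
      using nest4[where h = "\<lambda>p w. if g2 (snd w) = p then (1::real) else 0" and A = "{..<M0}"
          and B = "{..<M2}" and Y = Yn and Z = Zn] by (simp only: snd_conv)
    also have "\<dots> \<le> real (card (Yn \<times> Zn))" by (rule count_le) (use fin in auto)
    finally show ?thesis .
  qed
  have "real (M0*M1*M2) - (\<Sum>m0<M0. \<Sum>m1<M1. \<Sum>m2<M2. c m0 m1 m2)
      = (\<Sum>m0<M0. \<Sum>m1<M1. \<Sum>m2<M2. 1 - c m0 m1 m2)"
    by (simp add: sum_subtractf)
  also have "\<dots> \<le> (\<Sum>m0<M0. \<Sum>m1<M1. \<Sum>m2<M2. err m0 m1 m2)"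
    by (intro sum_mono ce)
  finally have c1: "real (M0*M1*M2) / 2 \<le> (\<Sum>m0<M0. \<Sum>m1<M1. \<Sum>m2<M2. c m0 m1 m2)"
    using se by linarith
  have "(\<Sum>m0<M0. \<Sum>m1<M1. \<Sum>m2<M2. c m0 m1 m2)
     \<le> (\<Sum>m0<M0. \<Sum>m1<M1. \<Sum>m2<M2. (\<Sum>y\<in>Yn. \<Sum>z\<in>Zn. if g2 z = (m0, m2) then 1 else 0))"
    by (intro sum_mono cb)
  also have "\<dots> = real M1 * (\<Sum>m0<M0. \<Sum>m2<M2. \<Sum>y\<in>Yn. \<Sum>z\<in>Zn. if g2 z = (m0, m2) then 1 else 0)"
    by (simp add: sum_distrib_left)
  also have "\<dots> \<le> real M1 * real (card (Yn \<times> Zn))"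
    by (intro mult_left_mono cnt) auto
  finally have "real (M0*M1*M2) / 2 \<le> real M1 * real (card (Yn \<times> Zn))" using c1 by linarith
  hence "real M1 * (real (M0*M2)) \<le> real M1 * (2 * real (card (Yn \<times> Zn)))"
    by (simp add: algebra_simps)
  hence MM: "real (M0*M2) \<le> 2 * real (card (Yn \<times> Zn))" using Mp by simp
  have cardYZ: "real (card (Yn \<times> Zn)) = real (CARD('y) * CARD('z)) ^ n"
    unfolding Yn_def Zn_def by (simp add: card_cartesian_product card_PiE power_mult_distrib)
  have "2 powr (real n * (R0 + R2)) = 2 powr (real n * R0) * 2 powr (real n * R2)"
    by (simp add: powr_add[symmetric] algebra_simps)
  also have "\<dots> \<le> real M0 * real M2" unfolding M0_def M2_def
    by (intro mult_mono ms_ge) auto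
  finally have "2 powr (real n * (R0 + R2)) \<le> 2 * real (CARD('y) * CARD('z)) ^ n"
    using MM cardYZ by simp
  moreover have "real (CARD('y) * CARD('z)) \<ge> 1"
  proof -
    have "0 < CARD('y) * CARD('z)" by simp
    hence "1 \<le> CARD('y) * CARD('z)" by linarith
    thus ?thesis by (metis of_nat_1 of_nat_le_iff)
  qed
  ultimately show ?thesis using log_final[of n "R0 + R2"] n_def by simp
qed

lemma shift_ach:
  fixes q :: "'x::finite \<Rightarrow> ('y::finite \<times> 'z::finite) pmf"
  assumes A: "bc_achievable q (R0,R1,R2)" and t: "t = min R1 R2" and tpos: "t > 0"
    and d: "0 < \<delta>" "\<delta> \<le> t"
  shows "bc_achievable q (R0 + t - \<delta>, R1 - t, R2 - t)"
proof -
  from A have nn: "R0 \<ge> 0" "R1 \<ge> 0" "R2 \<ge> 0" and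
    ach: "\<forall>\<epsilon>>0. \<exists>N. \<forall>n\<ge>N. \<exists>f g1 g2.
          bc_avg_error q n (msg_size n R0) (msg_size n R1) (msg_size n R2) f g1 g2 \<le> \<epsilon>"
    by (auto simp: bc_achievable_def)
  have tR: "t \<le> R1" "t \<le> R2" using t by auto
  have "\<exists>N. \<forall>n\<ge>N. \<exists>f g1 g2. bc_avg_error q n (msg_size n (R0 + t - \<delta>))
          (msg_size n (R1 - t)) (msg_size n (R2 - t)) f g1 g2 \<le> \<epsilon>" if e: "\<epsilon> > 0" for \<epsilon>
  proof -
    obtain N where hN: "\<forall>n\<ge>N. \<exists>f g1 g2.
          bc_avg_error q n (msg_size n R0) (msg_size n R1) (msg_size n R2) f g1 g2 \<le> \<epsilon>"
      using ach e by auto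
    define N' where "N' = max N (nat \<lceil>4 / \<delta>\<rceil>)"
    have "\<exists>f g1 g2. bc_avg_error q n (msg_size n (R0 + t - \<delta>))
          (msg_size n (R1 - t)) (msg_size n (R2 - t)) f g1 g2 \<le> \<epsilon>" if n: "n \<ge> N'" for n
    proof -
      have "n \<ge> N" using n N'_def by simp
      then obtain f g1 g2 where old:
        "bc_avg_error q n (msg_size n R0) (msg_size n R1) (msg_size n R2) f g1 g2 \<le> \<epsilon>"
        using hN by blast
      have "real n \<ge> 4 / \<delta>"
      proof -
        have "nat \<lceil>4 / \<delta>\<rceil> \<le> n" using n N'_def by simp
        hence "real (nat \<lceil>4 / \<delta>\<rceil>) \<le> real n" by simp
        moreover have "4 / \<delta> \<le> real (nat \<lceil>4 / \<delta>\<rceil>)" by linarith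
        ultimately show ?thesis by linarith
      qed
      hence nd: "4 \<le> real n * \<delta>" using d by (simp add: divide_le_eq mult.commute)
      define y where "y = 2 powr (real n * (t - \<delta>/2))"
      define K where "K = nat \<lfloor>y\<rfloor>"
      have y1: "y \<ge> 1" unfolding y_def by (rule ge_one_powr_ge_zero) (use d in auto)
      have Kr: "real K = real_of_int \<lfloor>y\<rfloor>" unfolding K_def using y1 by simp
      have Kd1: "real K \<le> 2 powr (real n * (t - \<delta>/2))" using Kr y_def by linarith
      have Kd2: "real K > 2 powr (real n * (t - \<delta>/2)) - 1" using Kr y_def by linarith
      have Kp: "K > 0" using Kd2 y1 y_def by simp
      have c: "msg_size n (R0 + t - \<delta>) \<le> msg_size n R0 * K"
        by (rule size_common[OF nn(1) d(2) nd Kd2])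
      have d2: "1 \<le> real n * \<delta> / 2" using nd by simp
      have p1: "msg_size n (R1 - t) * K \<le> msg_size n R1" by (rule size_priv[OF tR(1) d2 Kd1])
      have p2: "msg_size n (R2 - t) * K \<le> msg_size n R2" by (rule size_priv[OF tR(2) d2 Kd1])
      have pos: "msg_size n (R0 + t - \<delta>) > 0" "msg_size n (R1 - t) > 0" "msg_size n (R2 - t) > 0"
        using ms_pos by (auto simp: Suc_le_eq)
      obtain f' g1' g2' where
        "bc_avg_error q n (msg_size n (R0 + t - \<delta>)) (msg_size n (R1 - t)) (msg_size n (R2 - t)) f' g1' g2'
         \<le> bc_avg_error q n (msg_size n R0) (msg_size n R1) (msg_size n R2) f g1 g2"
        using construct[OF Kp pos c p1 p2, of q n f g1 g2] by blast
      thus ?thesis using old by (meson order_trans)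
    qed
    thus ?thesis by blast
  qed
  moreover have "R0 + t - \<delta> \<ge> 0" "R1 - t \<ge> 0" "R2 - t \<ge> 0" using nn d tR by auto
  ultimately show ?thesis unfolding bc_achievable_def by auto
qed

lemma shift_closure:
  fixes q :: "'x::finite \<Rightarrow> ('y::finite \<times> 'z::finite) pmf"
  assumes A: "bc_achievable q (R0,R1,R2)"
  shows "(R0 + min R1 R2, R1 - min R1 R2, R2 - min R1 R2) \<in> closure {R. bc_achievable q R}"
proof -
  define t where "t = min R1 R2"
  have nn: "R1 \<ge> 0" "R2 \<ge> 0" using A by (auto simp: bc_achievable_def)
  show ?thesis
  proof (cases "t = 0")
    case True
    thus ?thesis using A closure_subset t_def by fastforce
  next
    case False
    have "t \<ge> 0" using nn t_def by simp
    hence tp: "t > 0" using False by linarith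
    have "\<exists>y\<in>{R. bc_achievable q R}. dist y (R0 + t, R1 - t, R2 - t) < e" if e: "e > 0" for e
    proof -
      define \<delta> where "\<delta> = min t (e/2)"
      have dd: "0 < \<delta>" "\<delta> \<le> t" using tp e \<delta>_def by auto
      have "bc_achievable q (R0 + t - \<delta>, R1 - t, R2 - t)"
        by (rule shift_ach[OF A t_def tp dd])
      moreover have "dist (R0 + t - \<delta>, R1 - t, R2 - t) (R0 + t, R1 - t, R2 - t) < e"
        using dd e \<delta>_def by (simp add: dist_Pair_Pair dist_real_def)
      ultimately show ?thesis by blast
    qed
    thus ?thesis unfolding t_def closure_approachable by blast
  qed
qed

lemma zero_ach: "bc_achievable q (0, 0, 0)"
proof -
  have ms: "msg_size n 0 = 1" for n unfolding msg_size_def by simp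
  have h: "bc_avg_error q n (msg_size n 0) (msg_size n 0) (msg_size n 0) f (\<lambda>_. (0,0)) (\<lambda>_. (0,0)) = 0" for n f
    unfolding bc_avg_error_def bc_prob_def ms by simp
  have "\<forall>\<epsilon>>0. \<exists>N. \<forall>n\<ge>N. \<exists>f g1 g2.
          bc_avg_error q n (msg_size n 0) (msg_size n 0) (msg_size n 0) f g1 g2 \<le> \<epsilon>"
  proof (intro allI impI)
    fix \<epsilon> :: real assume "\<epsilon> > 0"
    thus "\<exists>N. \<forall>n\<ge>N. \<exists>f g1 g2.
          bc_avg_error q n (msg_size n 0) (msg_size n 0) (msg_size n 0) f g1 g2 \<le> \<epsilon>"
      using h by (metis less_imp_le)
  qed
  thus ?thesis unfolding bc_achievable_def by simp
qed

theorem corollary1: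
  fixes q :: "'x::finite \<Rightarrow> ('y::finite \<times> 'z::finite) pmf"
    and l0 l1 l2 :: real
  assumes "l0 \<ge> l1 + l2"
  shows "\<exists>R0 R1 R2. (R0, R1, R2) \<in> bc_capacity_region q \<and> (R1 = 0 \<or> R2 = 0) \<and>
           (\<forall>S0 S1 S2. (S0, S1, S2) \<in> bc_capacity_region q \<longrightarrow>
              l0 * S0 + l1 * S1 + l2 * S2 \<le> l0 * R0 + l1 * R1 + l2 * R2)"
proof -
  define A where "A = {R. bc_achievable q R}"
  define C where "C = bc_capacity_region q"
  have CA: "C = closure A" unfolding C_def A_def bc_capacity_region_def ..
  define B where "B = 1 + log 2 (real (CARD('y) * CARD('z)))"
  define Box where "Box = {0..B} \<times> {0..B} \<times> {0..B}"
  have AB: "A \<subseteq> Box"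
  proof
    fix R assume "R \<in> A"
    obtain R0 R1 R2 where R: "R = (R0,R1,R2)" by (cases R) auto
    have a: "bc_achievable q (R0,R1,R2)" using \<open>R \<in> A\<close> R A_def by simp
    have nn: "R0 \<ge> 0" "R1 \<ge> 0" "R2 \<ge> 0" using a by (auto simp: bc_achievable_def)
    have "R0 + R1 \<le> B" using bound_Y[OF a] B_def by simp
    moreover have "R0 + R2 \<le> B" using bound_Z[OF a] B_def by simp
    ultimately show "R \<in> Box" unfolding Box_def R using nn by auto
  qed
  have cB: "compact Box" unfolding Box_def by (intro compact_Times compact_Icc)
  have CB: "C \<subseteq> Box" unfolding CA by (rule closure_minimal[OF AB compact_imp_closed[OF cB]])
  have "compact (C \<inter> Box)" unfolding CA by (rule closed_Int_compact) (use cB in auto)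
  hence cC: "compact C" using CB by (simp add: Int_absorb2)
  have ne: "C \<noteq> {}" using zero_ach[of q] closure_subset CA A_def by blast
  define obj where "obj = (\<lambda>p::real\<times>real\<times>real. l0 * fst p + l1 * fst (snd p) + l2 * snd (snd p))"
  have cont: "continuous_on C obj" unfolding obj_def by (intro continuous_intros)
  obtain P where P: "P \<in> C" "\<forall>y\<in>C. obj y \<le> obj P"
    using continuous_attains_sup[OF cC ne cont] by blast
  define T where "T = (\<lambda>p::real\<times>real\<times>real. (fst p + min (fst (snd p)) (snd (snd p)),
      fst (snd p) - min (fst (snd p)) (snd (snd p)), snd (snd p) - min (fst (snd p)) (snd (snd p))))"
  have TA: "T ` A \<subseteq> C"
  proof
    fix x assume "x \<in> T ` A"
    then obtain R where R: "R \<in> A" "x = T R" by blast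
    obtain R0 R1 R2 where Re: "R = (R0,R1,R2)" by (cases R) auto
    have "bc_achievable q (R0,R1,R2)" using R Re A_def by simp
    from shift_closure[OF this] show "x \<in> C" using R Re T_def CA A_def by simp
  qed
  have contT: "continuous_on UNIV T" unfolding T_def by (intro continuous_intros)
  have "T ` C \<subseteq> closure (T ` A)" unfolding CA
    by (rule continuous_image_closure_subset[OF contT]) simp
  also have "\<dots> \<subseteq> closure C" by (rule closure_mono[OF TA])
  also have "\<dots> = C" unfolding CA by simp
  finally have TC: "T ` C \<subseteq> C" .
  obtain a b c where Pe: "P = (a,b,c)" by (cases P) auto
  have abc: "a \<ge> 0" "b \<ge> 0" "c \<ge> 0" using P(1) CB Pe Box_def by auto
  define m where "m = min b c"
  have m0: "m \<ge> 0" using abc m_def by simp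
  have TP: "T P = (a + m, b - m, c - m)" unfolding T_def Pe m_def by simp
  have TPC: "(a + m, b - m, c - m) \<in> C" using TC P(1) TP by force
  have "obj (a + m, b - m, c - m) = obj P + m * (l0 - l1 - l2)"
    unfolding obj_def Pe by (simp add: algebra_simps)
  moreover have "m * (l0 - l1 - l2) \<ge> 0" using m0 assms by simp
  ultimately have better: "obj P \<le> obj (a + m, b - m, c - m)" by linarith
  have z: "b - m = 0 \<or> c - m = 0" unfolding m_def by (simp add: min_def)
  show ?thesis
  proof (intro exI conjI allI impI)
    show "(a + m, b - m, c - m) \<in> bc_capacity_region q" using TPC C_def by simp
    show "b - m = 0 \<or> c - m = 0" by (rule z)
    fix S0 S1 S2 assume "(S0, S1, S2) \<in> bc_capacity_region q"
    hence "obj (S0,S1,S2) \<le> obj P" using P(2) C_def by blast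
    thus "l0 * S0 + l1 * S1 + l2 * S2 \<le> l0 * (a + m) + l1 * (b - m) + l2 * (c - m)"
      using better unfolding obj_def by simp
  qed
qed

end
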